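(* Let $\mathcal{H}$ be a real Hilbert space, $\lambda>0$, and $F:\mathcal{H}\to\mathbb{R}\cup\{+\infty\}$ convex, proper and lower semicontinuous with $\arg\min F\neq\emptyset$, and let $F_\lambda$ be its Moreau envelope. Then: (1) if $F$ satisfies the nonsmooth Polyak–Łojasiewicz condition (ns-PL) with parameter $\mu>0$, then $F_\lambda$ satisfies the Polyak–Łojasiewicz condition (PL) with parameter $\frac{\mu}{\lambda\mu+1}$; (2) if $F_\lambda$ satisfies (PL) with parameter $\mu>0$, then $F$ satisfies (ns-PL) with parameter $\frac{\mu}{4}$.
   Context: Moreau envelope: $F_\lambda(x)=\min_{y\in\mathcal{H}}\{F(y)+\frac{1}{2\lambda}\|y-x\|^2\}$; proximal operator $\mathrm{prox}_{\lambda F}(x)=\arg\min_{y}\{F(y)+\frac{1}{2\lambda}\|y-x\|^2\}$. $F_\lambda$ is convex, differentiable with $\frac1\lambda$-Lipschitz gradient, $\min F_\lambda=\min F=:F_*$ and $\arg\min F_\lambda=\arg\min F$. (PL) with parameter $\mu$ for a differentiable $G$ with $\arg\min G\ne\emptyset$: $G(x)-\min G\le\frac1{2\mu}\|\nabla G(x)\|^2$ for all $x$. (ns-PL) with parameter $\mu$: $F(x)-F_*\le \frac{1}{2\mu}\,\mathrm{dist}(0,\partial F(x))^2$ for all $x\in\mathcal{H}$, where $\partial F$ is the convex subdifferential and $\mathrm{dist}(0,\emptyset)=+\infty$. *)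

theory Defs
  imports "HOL-Analysis.Analysis"
begin

definition proper_fun :: "('a \<Rightarrow> ereal) \<Rightarrow> bool" where
  "proper_fun F \<longleftrightarrow> (\<forall>x. F x \<noteq> -\<infinity>) \<and> (\<exists>x. F x \<noteq> \<infinity>)"

definition convex_fun :: "('a::real_vector \<Rightarrow> ereal) \<Rightarrow> bool" where
  "convex_fun F \<longleftrightarrow> (\<forall>x y t. 0 \<le> t \<and> t \<le> 1 \<longrightarrow>
      F ((1 - t) *\<^sub>R x + t *\<^sub>R y) \<le> ereal (1 - t) * F x + ereal t * F y)"

definition lsc_fun :: "('a::topological_space \<Rightarrow> ereal) \<Rightarrow> bool" where
  "lsc_fun F \<longleftrightarrow> (\<forall>x. F x \<le> Liminf (at x) F)"

definition subdiff :: "('a::real_inner \<Rightarrow> ereal) \<Rightarrow> 'a \<Rightarrow> 'a set" where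
  "subdiff F x = {v. F x \<noteq> \<infinity> \<and> (\<forall>y. F x + ereal (v \<bullet> (y - x)) \<le> F y)}"

text \<open>Moreau envelope (real-valued for proper lsc convex F).\<close>
definition moreau_env :: "('a::real_normed_vector \<Rightarrow> ereal) \<Rightarrow> real \<Rightarrow> 'a \<Rightarrow> real" where
  "moreau_env F lam x = real_of_ereal (INF y. F y + ereal (norm (y - x) ^ 2 / (2 * lam)))"

definition dist0_sq :: "'a::real_normed_vector set \<Rightarrow> ereal" where
  "dist0_sq S = (if S = {} then \<infinity> else ereal ((infdist 0 S)\<^sup>2))"

definition PL :: "('a::real_inner \<Rightarrow> real) \<Rightarrow> real \<Rightarrow> bool" where
  "PL G mu \<longleftrightarrow> (\<forall>x. G differentiable (at x)) \<and> (\<exists>z. \<forall>x. G z \<le> G x) \<and>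
     (\<forall>x g. (G has_derivative (\<lambda>h. g \<bullet> h)) (at x) \<longrightarrow>
        G x - (INF y. G y) \<le> norm g ^ 2 / (2 * mu))"

definition nsPL :: "('a::real_inner \<Rightarrow> ereal) \<Rightarrow> real \<Rightarrow> bool" where
  "nsPL F mu \<longleftrightarrow> (\<forall>x. F x - (INF y. F y) \<le> dist0_sq (subdiff F x) / ereal (2 * mu))"

end

theory Submission
  imports Defs
begin


lemma par_id:
  fixes a b x :: "'a::real_inner"
  shows "norm ((1/2) *\<^sub>R (a + b) - x)^2 = (norm (a - x)^2 + norm (b - x)^2)/2 - norm (a - b)^2/4"
proof -
  have e: "(1/2) *\<^sub>R (a + b) - x = (1/2) *\<^sub>R ((a - x) + (b - x))"
    by (metis (no_types, lifting) add_diff_add scaleR_half_double scaleR_right_diff_distrib)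
  have f: "a - b = (a - x) - (b - x)" by simp
  show ?thesis unfolding e f
    by (simp add: power2_norm_eq_inner inner_add_left inner_add_right inner_diff_left inner_diff_right inner_commute algebra_simps) (simp add: field_simps)
qed

lemma conv_id:
  fixes p y x :: "'a::real_inner"
  shows "norm ((1 - t) *\<^sub>R p + t *\<^sub>R y - x)^2 = norm (p - x)^2 + 2 * t * ((p - x) \<bullet> (y - p)) + t^2 * norm (y - p)^2"
proof -
  have e: "(1 - t) *\<^sub>R p + t *\<^sub>R y - x = (p - x) + t *\<^sub>R (y - p)" by (simp add: algebra_simps)
  show ?thesis unfolding e power2_norm_eq_inner
    by (simp add: inner_add_left inner_add_right inner_diff_left inner_diff_right inner_commute algebra_simps power2_eq_square)
qed

lemma sq_id:
  fixes p y x :: "'a::real_inner"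
  shows "norm (y - x)^2 = norm (y - p)^2 + 2 * ((y - p) \<bullet> (p - x)) + norm (p - x)^2"
proof -
  have e: "y - x = (y - p) + (p - x)" by simp
  show ?thesis by (subst e) (simp add: power2_norm_eq_inner inner_add_left inner_add_right inner_commute algebra_simps)
qed

lemma small_t:
  fixes a b c :: real
  assumes "c \<ge> 0" "\<And>t. 0 < t \<Longrightarrow> t \<le> 1 \<Longrightarrow> a \<le> b + t * c"
  shows "a \<le> b"
proof (rule ccontr)
  assume "\<not> a \<le> b"
  define t where "t = min 1 ((a - b) / (2 * (c + 1)))"
  have tp: "0 < t" "t \<le> 1" using \<open>\<not> a \<le> b\<close> assms(1) by (auto simp: t_def)
  have "t * c \<le> ((a - b) / (2 * (c + 1))) * c" using assms(1) by (intro mult_right_mono) (auto simp: t_def)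
  also have "\<dots> < a - b"
  proof -
    have "(a-b)*(c+2) > 0" using \<open>\<not> a \<le> b\<close> assms(1) by simp
    then show ?thesis using assms(1) by (simp add: field_simps)
  qed
  finally show False using assms(2)[OF tp] by simp
qed

locale menv =
  fixes F :: "'a::{real_inner,complete_space} \<Rightarrow> ereal" and lam :: real and z0 :: 'a
  assumes lam: "lam > 0" and cvx: "convex_fun F" and prp: "proper_fun F" and lsc: "lsc_fun F"
    and zmin: "\<forall>x. F z0 \<le> F x"
begin

definition Fr where "Fr y = real_of_ereal (F y)"
definition m where "m = Fr z0"
definition phi where "phi x y = F y + ereal (norm (y - x)^2 / (2 * lam))"

lemma ninf: "F y \<noteq> -\<infinity>" using prp by (auto simp: proper_fun_def)

lemma F_eq: "F y \<noteq> \<infinity> \<Longrightarrow> F y = ereal (Fr y)"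
  using ninf[of y] by (cases "F y") (auto simp: Fr_def)

lemma Fz0: "F z0 = ereal m"
proof -
  obtain x1 where "F x1 \<noteq> \<infinity>" using prp by (auto simp: proper_fun_def)
  then have "F z0 \<noteq> \<infinity>" using zmin[rule_format, of x1] by auto
  then show ?thesis using F_eq m_def by simp
qed

lemma F_ge: "ereal m \<le> F y" using zmin Fz0 by metis

lemma Fr_ge: "F y \<noteq> \<infinity> \<Longrightarrow> m \<le> Fr y" using F_ge[of y] F_eq[of y] by simp

lemma phi_fin: "F y \<noteq> \<infinity> \<Longrightarrow> phi x y = ereal (Fr y + norm (y - x)^2 / (2 * lam))"
  using F_eq[of y] by (simp add: phi_def)

lemma phi_inf: "F y = \<infinity> \<Longrightarrow> phi x y = \<infinity>"
  by (simp add: phi_def)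

lemma phi_ge: "ereal m \<le> phi x y"
proof -
  have "F y \<le> phi x y" unfolding phi_def using lam by (intro ereal_le_add_self) simp
  then show ?thesis using F_ge order_trans by blast
qed

lemma conv:
  assumes "F a \<noteq> \<infinity>" "F b \<noteq> \<infinity>" "0 \<le> t" "t \<le> 1"
  shows "F ((1 - t) *\<^sub>R a + t *\<^sub>R b) \<noteq> \<infinity> \<and> Fr ((1 - t) *\<^sub>R a + t *\<^sub>R b) \<le> (1 - t) * Fr a + t * Fr b"
proof -
  have "F ((1 - t) *\<^sub>R a + t *\<^sub>R b) \<le> ereal (1 - t) * F a + ereal t * F b"
    using cvx assms(3,4) by (auto simp: convex_fun_def)
  also have "\<dots> = ereal ((1 - t) * Fr a + t * Fr b)"
    using F_eq[OF assms(1)] F_eq[OF assms(2)] by simp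
  finally have h: "F ((1 - t) *\<^sub>R a + t *\<^sub>R b) \<le> ereal ((1 - t) * Fr a + t * Fr b)" .
  then have "F ((1 - t) *\<^sub>R a + t *\<^sub>R b) \<noteq> \<infinity>" by auto
  moreover have "F ((1 - t) *\<^sub>R a + t *\<^sub>R b) = ereal (Fr ((1 - t) *\<^sub>R a + t *\<^sub>R b))"
    using F_eq calculation by blast
  ultimately show ?thesis using h by simp
qed

lemma lsc_seq:
  assumes a: "a \<longlonglongrightarrow> p" and ab: "\<And>n. F (a n) \<le> ereal (b n)" and b: "b \<longlonglongrightarrow> \<beta>"
  shows "F p \<le> ereal \<beta>"
proof (rule ccontr)
  assume "\<not> F p \<le> ereal \<beta>"
  then have "ereal \<beta> < F p" by simp
  then obtain c where c: "ereal \<beta> < ereal c" "ereal c < F p" using ereal_dense2 by blast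
  have "F p \<le> Liminf (at p) F" using lsc by (auto simp: lsc_fun_def)
  then have "eventually (\<lambda>y. ereal c < F y) (at p)" using c(2) by (simp add: le_Liminf_iff)
  then have "eventually (\<lambda>y. ereal c < F y) (nhds p)" using c(2) by (simp add: eventually_nhds_conv_at)
  then have e1: "eventually (\<lambda>n. ereal c < F (a n)) sequentially"
    using a by (rule eventually_compose_filterlim)
  have e2: "eventually (\<lambda>n. b n < c) sequentially" using b c(1) order_tendstoD(2) by auto
  have "eventually (\<lambda>n. False) sequentially"
    using e1 e2
  proof eventually_elim
    case (elim n)
    have "ereal c < ereal (b n)" using elim(1) ab[of n] by (rule less_le_trans)
    then show ?case using elim(2) by simp
  qed
  then show False by simp
qed

end



lemma aux_lin: "(Fw::real) \<le> a/2 + b/2 \<Longrightarrow> M \<le> Fw + qw \<Longrightarrow> qw = (qa+qb)/2 - D \<Longrightarrow> a + qa < M + e1 \<Longrightarrow> b + qb < M + e2 \<Longrightarrow> D \<le> (e1+e2)/2"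
  by argo

context menv begin

lemma prox_ex: "\<exists>p. F p \<noteq> \<infinity> \<and> (\<forall>y. phi x p \<le> phi x y)"
proof -
  obtain x1 where x1: "F x1 \<noteq> \<infinity>" using prp by (auto simp: proper_fun_def)
  define M where "M = (INF y. phi x y)"
  define q where "q y = norm (y - x)^2 / (2 * lam)" for y
  have "M \<le> phi x x1" unfolding M_def by (rule INF_lower) simp
  then have Mi: "M \<noteq> \<infinity>" using phi_fin[OF x1] by auto
  have Mm: "ereal m \<le> M" unfolding M_def by (rule INF_greatest) (rule phi_ge)
  then obtain Mr where Mr: "M = ereal Mr" using Mi by (cases M) auto
  have "\<exists>y. phi x y < ereal (Mr + inverse (real (Suc n)))" for n
  proof -
    have "M < ereal (Mr + inverse (real (Suc n)))" using Mr by simp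
    then show ?thesis unfolding M_def by (simp add: INF_less_iff)
  qed
  then obtain a where a: "\<And>n. phi x (a n) < ereal (Mr + inverse (real (Suc n)))" by metis
  have aF: "F (a n) \<noteq> \<infinity>" for n using a[of n] phi_inf by force
  have ar: "Fr (a n) + q (a n) < Mr + inverse (real (Suc n))" for n
    using a[of n] phi_fin[OF aF[of n]] by (simp add: q_def)
  have lowr: "Mr \<le> Fr y + q y" if "F y \<noteq> \<infinity>" for y
  proof -
    have "M \<le> phi x y" unfolding M_def by (rule INF_lower) simp
    then show ?thesis using Mr phi_fin[OF that] by (simp add: q_def)
  qed
  have dist: "norm (a n - a k)^2 \<le> 4 * lam * (inverse (real (Suc n)) + inverse (real (Suc k)))" for n k
  proof -
    define w where "w = (1/2) *\<^sub>R (a n + a k)"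
    have ww: "w = (1 - 1/2) *\<^sub>R a n + (1/2) *\<^sub>R a k" unfolding w_def by (simp add: scaleR_add_right)
    have cw: "F w \<noteq> \<infinity>" "Fr w \<le> (1 - 1/2) * Fr (a n) + (1/2) * Fr (a k)"
      using conv[OF aF[of n] aF[of k], of "1/2"] unfolding ww by auto
    have qw: "q w = (q (a n) + q (a k)) / 2 - norm (a n - a k)^2 / (8 * lam)"
      unfolding q_def w_def par_id using lam by (simp add: field_simps)
    have "Mr \<le> Fr w + q w" by (rule lowr[OF cw(1)])
    then have "norm (a n - a k)^2 / (8 * lam) \<le> (inverse (real (Suc n)) + inverse (real (Suc k))) / 2"
    proof -
      have "Fr w \<le> Fr (a n) / 2 + Fr (a k) / 2" using cw(2) by simp
      then show ?thesis using \<open>Mr \<le> Fr w + q w\<close> qw ar[of n] ar[of k] by (rule aux_lin)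
    qed
    then have "norm (a n - a k)^2 \<le> ((inverse (real (Suc n)) + inverse (real (Suc k))) / 2) * (8 * lam)"
      using lam by (subst (asm) pos_divide_le_eq) auto
    then show ?thesis by argo
  qed
  have "Cauchy a"
  proof (rule metric_CauchyI)
    fix e :: real assume e: "0 < e"
    obtain N where N: "inverse (real (Suc N)) < e^2 / (8 * lam)"
      using reals_Archimedean[of "e^2 / (8 * lam)"] e lam by auto
    show "\<exists>M. \<forall>m\<ge>M. \<forall>n\<ge>M. dist (a m) (a n) < e"
    proof (intro exI allI impI)
      fix n k assume nk: "N \<le> n" "N \<le> k"
      have i1: "inverse (real (Suc n)) \<le> inverse (real (Suc N))" using nk by (simp add: le_imp_inverse_le)
      have i2: "inverse (real (Suc k)) \<le> inverse (real (Suc N))" using nk by (simp add: le_imp_inverse_le)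
      have "norm (a n - a k)^2 \<le> 4 * lam * (2 * inverse (real (Suc N)))"
        using dist[of n k] i1 i2 lam by (smt (verit) mult_left_mono)
      also have "\<dots> < e^2" using N lam by (simp add: field_simps)
      finally have "norm (a n - a k)^2 < e^2" .
      then show "dist (a n) (a k) < e" using e by (simp add: dist_norm power_less_imp_less_base)
    qed
  qed
  then obtain p where p: "a \<longlonglongrightarrow> p" using Cauchy_convergent_iff convergent_def by blast
  have lim: "(\<lambda>n. Mr + inverse (real (Suc n)) - q (a n)) \<longlonglongrightarrow> Mr + 0 - q p"
    unfolding q_def using lam by (intro tendsto_intros LIMSEQ_inverse_real_of_nat p) auto
  have "F p \<le> ereal (Mr + 0 - q p)"
  proof (rule lsc_seq[OF p _ lim])
    fix n show "F (a n) \<le> ereal (Mr + inverse (real (Suc n)) - q (a n))"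
      using ar[of n] F_eq[OF aF[of n]] by simp
  qed
  then have pF: "F p \<noteq> \<infinity>" by auto
  have "Fr p + q p \<le> Mr" using \<open>F p \<le> ereal (Mr + 0 - q p)\<close> F_eq[OF pF] by simp
  then have "phi x p \<le> M" using phi_fin[OF pF] Mr by (simp add: q_def)
  moreover have "M \<le> phi x y" for y unfolding M_def by (rule INF_lower) simp
  ultimately show ?thesis using pF order_trans by blast
qed

end


lemma aux_div: "(L::real) > 0 \<Longrightarrow> (A + 2 * B + C) / (2 * L) = A / (2 * L) + B / L + C / (2 * L)"
  by (simp add: field_simps)

context menv begin

lemma prox_sub:
  assumes pF: "F p \<noteq> \<infinity>" and pm: "\<forall>y. phi x p \<le> phi x y"
  shows "(1 / lam) *\<^sub>R (x - p) \<in> subdiff F p"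
  unfolding subdiff_def
proof (intro CollectI conjI allI pF)
  fix y
  show "F p + ereal (((1 / lam) *\<^sub>R (x - p)) \<bullet> (y - p)) \<le> F y"
  proof (cases "F y = \<infinity>")
    case True then show ?thesis by simp
  next
    case yF: False
    define ip where "ip = (p - x) \<bullet> (y - p)"
    define N where "N = norm (y - p)^2"
    have key: "Fr p - Fr y \<le> ip / lam + t * (N / (2 * lam))" if t: "0 < t" "t \<le> 1" for t
    proof -
      define w where "w = (1 - t) *\<^sub>R p + t *\<^sub>R y"
      have cw: "F w \<noteq> \<infinity>" "Fr w \<le> (1 - t) * Fr p + t * Fr y"
        using conv[OF pF yF, of t] t unfolding w_def by auto
      have h1: "Fr p + norm (p - x)^2 / (2 * lam) \<le> Fr w + norm (w - x)^2 / (2 * lam)"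
        using pm[rule_format, of w] phi_fin[OF pF] phi_fin[OF cw(1)] by simp
      have h3: "norm (w - x)^2 = norm (p - x)^2 + 2 * t * ip + t^2 * N"
        unfolding w_def ip_def N_def by (rule conv_id)
      have h4: "norm (w - x)^2 / (2 * lam) = norm (p - x)^2 / (2 * lam) + t * (ip / lam + t * (N / (2 * lam)))"
        unfolding h3 using lam by (simp add: field_simps power2_eq_square)
      have "t * (Fr p - Fr y) \<le> t * (ip / lam + t * (N / (2 * lam)))"
        using h1 h4 cw(2) by (simp add: algebra_simps)
      then show ?thesis using t by simp
    qed
    have "Fr p - Fr y \<le> ip / lam"
      by (rule small_t[of "N / (2 * lam)"]) (use key lam N_def in auto)
    moreover have "((1 / lam) *\<^sub>R (x - p)) \<bullet> (y - p) = - (ip / lam)"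
    proof -
      have "(x - p) \<bullet> (y - p) = - ip" unfolding ip_def by (metis inner_minus_left minus_diff_eq)
      then show ?thesis by simp
    qed
    ultimately show ?thesis using F_eq[OF pF] F_eq[OF yF] by simp
  qed
qed

lemma qg:
  assumes v: "(1 / lam) *\<^sub>R (x - p) \<in> subdiff F p" and yF: "F y \<noteq> \<infinity>"
  shows "Fr p + norm (p - x)^2 / (2 * lam) + norm (y - p)^2 / (2 * lam) \<le> Fr y + norm (y - x)^2 / (2 * lam)"
proof -
  have pF: "F p \<noteq> \<infinity>" using v by (simp add: subdiff_def)
  have "F p + ereal (((1 / lam) *\<^sub>R (x - p)) \<bullet> (y - p)) \<le> F y" using v by (simp add: subdiff_def)
  then have s: "Fr p + ((1 / lam) *\<^sub>R (x - p)) \<bullet> (y - p) \<le> Fr y" using F_eq[OF pF] F_eq[OF yF] by simp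
  have e: "((1 / lam) *\<^sub>R (x - p)) \<bullet> (y - p) = - (((y - p) \<bullet> (p - x)) / lam)"
  proof -
    have "(x - p) \<bullet> (y - p) = - ((y - p) \<bullet> (p - x))" by (metis inner_commute inner_minus_left minus_diff_eq)
    then show ?thesis by simp
  qed
  have sq: "norm (y - x)^2 / (2 * lam) = norm (y - p)^2 / (2 * lam) + ((y - p) \<bullet> (p - x)) / lam + norm (p - x)^2 / (2 * lam)"
    unfolding sq_id[of y x p] using lam by (rule aux_div)
  show ?thesis using s e sq by linarith
qed

definition E where "E = moreau_env F lam"

lemma E_def2: "ereal (E x) = (INF y. phi x y)"
proof -
  obtain x1 where x1: "F x1 \<noteq> \<infinity>" using prp by (auto simp: proper_fun_def)
  have "(INF y. phi x y) \<le> phi x x1" by (rule INF_lower) simp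
  then have a: "(INF y. phi x y) \<noteq> \<infinity>" using phi_fin[OF x1] by auto
  have "ereal m \<le> (INF y. phi x y)" by (rule INF_greatest) (rule phi_ge)
  then have b: "(INF y. phi x y) \<noteq> -\<infinity>" by auto
  have "E x = real_of_ereal (INF y. phi x y)" unfolding E_def moreau_env_def phi_def ..
  then show ?thesis using a b by (cases "INF y. phi x y") auto
qed

lemma E_le: "F q \<noteq> \<infinity> \<Longrightarrow> E x \<le> Fr q + norm (q - x)^2 / (2 * lam)"
proof -
  assume qF: "F q \<noteq> \<infinity>"
  have "ereal (E x) \<le> phi x q" unfolding E_def2 by (rule INF_lower) simp
  then show ?thesis using phi_fin[OF qF] by simp
qed

lemma E_val:
  assumes v: "(1 / lam) *\<^sub>R (x - p) \<in> subdiff F p"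
  shows "E x = Fr p + norm (p - x)^2 / (2 * lam)"
proof -
  have pF: "F p \<noteq> \<infinity>" using v by (simp add: subdiff_def)
  have "ereal (Fr p + norm (p - x)^2 / (2 * lam)) \<le> (INF y. phi x y)"
  proof (rule INF_greatest)
    fix y show "ereal (Fr p + norm (p - x)^2 / (2 * lam)) \<le> phi x y"
    proof (cases "F y = \<infinity>")
      case True then show ?thesis by (simp add: phi_inf)
    next
      case False
      have "0 \<le> norm (y - p)^2 / (2 * lam)" using lam by simp
      then show ?thesis using qg[OF v False] phi_fin[OF False] by simp
    qed
  qed
  then have "Fr p + norm (p - x)^2 / (2 * lam) \<le> E x" unfolding E_def2[symmetric] by simp
  then show ?thesis using E_le[OF pF, of x] by simp
qed

lemma E_ge: "m \<le> E x"
proof -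
  have "ereal m \<le> (INF y. phi x y)" by (rule INF_greatest) (rule phi_ge)
  then show ?thesis unfolding E_def2[symmetric] by simp
qed

lemma E_inf: "(INF y. E y) = m"
proof -
  have "F z0 \<noteq> \<infinity>" using Fz0 by simp
  then have "E z0 \<le> m" using E_le[of z0 z0] by (simp add: m_def)
  then have "E z0 = m" using E_ge[of z0] by simp
  then have "m \<in> range E" by (metis rangeI)
  moreover have "\<And>u. u \<in> range E \<Longrightarrow> m \<le> u" using E_ge by auto
  ultimately show ?thesis by (rule cInf_eq_minimum)
qed

lemma F_inf: "(INF y. F y) = ereal m"
proof (rule antisym)
  show "(INF y. F y) \<le> ereal m" unfolding Fz0[symmetric] by (rule INF_lower) simp
  show "ereal m \<le> (INF y. F y)" by (rule INF_greatest) (rule F_ge)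
qed

lemma sub_ex: "\<exists>p. (1 / lam) *\<^sub>R (x - p) \<in> subdiff F p"
proof -
  obtain p where "F p \<noteq> \<infinity>" "\<forall>y. phi x p \<le> phi x y" using prox_ex[of x] by blast
  then show ?thesis using prox_sub by blast
qed

end


context menv begin

lemma E_bound:
  assumes v: "(1 / lam) *\<^sub>R (x - p) \<in> subdiff F p"
  shows "\<bar>E y - E x - ((1 / lam) *\<^sub>R (x - p)) \<bullet> (y - x)\<bar> \<le> norm (y - x)^2 / (2 * lam)"
proof -
  obtain p' where v': "(1 / lam) *\<^sub>R (y - p') \<in> subdiff F p'" using sub_ex by blast
  have pF: "F p \<noteq> \<infinity>" using v by (simp add: subdiff_def)
  have p'F: "F p' \<noteq> \<infinity>" using v' by (simp add: subdiff_def)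
  have Ex: "E x = Fr p + norm (p - x)^2 / (2 * lam)" by (rule E_val[OF v])
  have Ey: "E y = Fr p' + norm (p' - y)^2 / (2 * lam)" by (rule E_val[OF v'])
  define A where "A = (x - p) \<bullet> (y - x)"
  define B where "B = (y - p') \<bullet> (y - x)"
  have gA: "((1 / lam) *\<^sub>R (x - p)) \<bullet> (y - x) = A / lam" unfolding A_def by simp
  have up1: "E y \<le> Fr p + norm (p - y)^2 / (2 * lam)" by (rule E_le[OF pF])
  have sq1: "norm (p - y)^2 / (2 * lam) = norm (p - x)^2 / (2 * lam) + ((p - x) \<bullet> (x - y)) / lam + norm (x - y)^2 / (2 * lam)"
    unfolding sq_id[of p y x] using lam by (rule aux_div)
  have i1: "(p - x) \<bullet> (x - y) = A" unfolding A_def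
    by (metis inner_minus_left inner_minus_right minus_diff_eq minus_minus)
  have nxy: "norm (x - y) = norm (y - x)" by (rule norm_minus_commute)
  have upper: "E y - E x - A / lam \<le> norm (y - x)^2 / (2 * lam)"
    using up1 sq1 i1 nxy Ex by simp
  have lo1: "E x \<le> Fr p' + norm (p' - x)^2 / (2 * lam)" by (rule E_le[OF p'F])
  have sq2: "norm (p' - x)^2 / (2 * lam) = norm (p' - y)^2 / (2 * lam) + ((p' - y) \<bullet> (y - x)) / lam + norm (y - x)^2 / (2 * lam)"
    unfolding sq_id[of p' x y] using lam by (rule aux_div)
  have i2: "(p' - y) \<bullet> (y - x) = - B" unfolding B_def by (metis inner_minus_left minus_diff_eq)
  have lower0: "E x - E y \<le> - B / lam + norm (y - x)^2 / (2 * lam)"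
    using lo1 sq2 i2 Ey by simp
  define w where "w = (y - p') - (x - p)"
  define e where "e = p' - p"
  have s1: "F p + ereal (((1 / lam) *\<^sub>R (x - p)) \<bullet> (p' - p)) \<le> F p'" using v by (simp add: subdiff_def)
  have s2: "F p' + ereal (((1 / lam) *\<^sub>R (y - p')) \<bullet> (p - p')) \<le> F p" using v' by (simp add: subdiff_def)
  have r1: "Fr p + ((x - p) \<bullet> e) / lam \<le> Fr p'" using s1 F_eq[OF pF] F_eq[OF p'F] by (simp add: e_def)
  have r2: "Fr p' - ((y - p') \<bullet> e) / lam \<le> Fr p"
  proof -
    have "(y - p') \<bullet> (p - p') = - ((y - p') \<bullet> e)" unfolding e_def by (metis inner_minus_right minus_diff_eq)
    then show ?thesis using s2 F_eq[OF pF] F_eq[OF p'F] by simp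
  qed
  have "((x - p) \<bullet> e) / lam - ((y - p') \<bullet> e) / lam \<le> 0" using r1 r2 by linarith
  then have "((x - p) \<bullet> e - (y - p') \<bullet> e) / lam \<le> 0" by (simp add: diff_divide_distrib)
  then have "(x - p) \<bullet> e - (y - p') \<bullet> e \<le> 0" using lam by (simp add: divide_le_0_iff)
  then have we: "0 \<le> w \<bullet> e" unfolding w_def by (simp add: inner_diff_left)
  have yx: "y - x = w + e" unfolding w_def e_def by (simp add: algebra_simps)
  have "B - A = w \<bullet> (y - x)" unfolding A_def B_def w_def by (simp add: inner_diff_left)
  also have "\<dots> = w \<bullet> w + w \<bullet> e" unfolding yx by (simp add: inner_add_right)
  finally have BA: "A \<le> B" using we inner_ge_zero[of w] by linarith
  then have "A / lam \<le> B / lam" using lam by (simp add: divide_right_mono)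
  then have lower: "- (norm (y - x)^2 / (2 * lam)) \<le> E y - E x - A / lam" using lower0 by simp
  show ?thesis unfolding gA using upper lower by linarith
qed

lemma E_deriv:
  assumes v: "(1 / lam) *\<^sub>R (x - p) \<in> subdiff F p"
  shows "(E has_derivative (\<lambda>h. ((1 / lam) *\<^sub>R (x - p)) \<bullet> h)) (at x)"
  unfolding has_derivative_iff_norm
proof (intro conjI)
  show "bounded_linear (\<lambda>h. ((1 / lam) *\<^sub>R (x - p)) \<bullet> h)" by (rule bounded_linear_inner_right)
  define g where "g = (1 / lam) *\<^sub>R (x - p)"
  have lim: "((\<lambda>y. norm (y - x) / (2 * lam)) \<longlongrightarrow> norm (x - x) / (2 * lam)) (at x)"
    using lam by (intro tendsto_intros) auto
  show "((\<lambda>y. norm (E y - E x - g \<bullet> (y - x)) / norm (y - x)) \<longlongrightarrow> 0) (at x)"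
  proof (rule Lim_null_comparison)
    show "((\<lambda>y. norm (y - x) / (2 * lam)) \<longlongrightarrow> 0) (at x)" using lim by simp
    show "\<forall>\<^sub>F y in at x. norm (norm (E y - E x - g \<bullet> (y - x)) / norm (y - x)) \<le> norm (y - x) / (2 * lam)"
    proof (rule always_eventually, rule allI)
      fix y
      have b: "\<bar>E y - E x - g \<bullet> (y - x)\<bar> \<le> norm (y - x)^2 / (2 * lam)" unfolding g_def by (rule E_bound[OF v])
      show "norm (norm (E y - E x - g \<bullet> (y - x)) / norm (y - x)) \<le> norm (y - x) / (2 * lam)"
      proof (cases "y = x")
        case True then show ?thesis by simp
      next
        case False
        then have np: "norm (y - x) > 0" by simp
        have "\<bar>E y - E x - g \<bullet> (y - x)\<bar> / norm (y - x) \<le> (norm (y - x)^2 / (2 * lam)) / norm (y - x)"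
          using b np by (rule divide_right_mono[OF _ less_imp_le])
        also have "\<dots> = norm (y - x) / (2 * lam)" using np by (simp add: power2_eq_square)
        finally show ?thesis by simp
      qed
    qed
  qed
qed

end


context menv begin

lemma E_z0: "E z0 = m"
proof -
  have "F z0 \<noteq> \<infinity>" using Fz0 by simp
  then have "E z0 \<le> m" using E_le[of z0 z0] by (simp add: m_def)
  then show ?thesis using E_ge[of z0] by simp
qed

lemma part1:
  assumes mu: "mu > 0" and ns: "nsPL F mu"
  shows "PL E (mu / (lam * mu + 1))"
  unfolding PL_def
proof (intro conjI allI impI)
  fix x
  obtain p where v: "(1 / lam) *\<^sub>R (x - p) \<in> subdiff F p" using sub_ex by blast
  show "E differentiable (at x)" by (rule differentiableI[OF E_deriv[OF v]])
next
  show "\<exists>z. \<forall>x. E z \<le> E x" using E_z0 E_ge by metis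
next
  fix x g
  assume d: "(E has_derivative (\<lambda>h. g \<bullet> h)) (at x)"
  obtain p where v: "(1 / lam) *\<^sub>R (x - p) \<in> subdiff F p" using sub_ex by blast
  define g0 where "g0 = (1 / lam) *\<^sub>R (x - p)"
  have "(\<lambda>h. g \<bullet> h) = (\<lambda>h. g0 \<bullet> h)" using has_derivative_unique[OF d E_deriv[OF v]] by (simp add: g0_def)
  then have "g \<bullet> (g - g0) = g0 \<bullet> (g - g0)" by metis
  then have "(g - g0) \<bullet> (g - g0) = 0" by (simp add: inner_diff_left)
  then have gg: "g = g0" by simp
  have pF: "F p \<noteq> \<infinity>" using v by (simp add: subdiff_def)
  have Ex: "E x = Fr p + norm (p - x)^2 / (2 * lam)" by (rule E_val[OF v])
  have ng: "norm g0 = norm (p - x) / lam" unfolding g0_def using lam by (simp add: norm_minus_commute)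
  then have "norm (p - x) = lam * norm g0" using lam by simp
  then have nq: "norm (p - x)^2 / (2 * lam) = lam * norm g0 ^2 / 2" using lam by (simp add: power2_eq_square)
  have S: "subdiff F p \<noteq> {}" using v by blast
  have "F p - (INF y. F y) \<le> dist0_sq (subdiff F p) / ereal (2 * mu)" using ns by (simp add: nsPL_def)
  then have "Fr p - m \<le> infdist 0 (subdiff F p) ^ 2 / (2 * mu)"
    using F_eq[OF pF] F_inf S mu by (simp add: dist0_sq_def)
  also have "\<dots> \<le> norm g0 ^ 2 / (2 * mu)"
  proof -
    have "infdist 0 (subdiff F p) \<le> norm g0" using infdist_le[of g0 "subdiff F p" 0] v by (simp add: g0_def)
    then have "infdist 0 (subdiff F p) ^ 2 \<le> norm g0 ^ 2" by (rule power_mono[OF _ infdist_nonneg])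
    then show ?thesis using mu by (simp add: divide_right_mono)
  qed
  finally have h: "Fr p - m \<le> norm g0 ^ 2 / (2 * mu)" .
  have "E x - (INF y. E y) = Fr p - m + lam * norm g0 ^2 / 2" using Ex nq E_inf by simp
  also have "\<dots> \<le> norm g0 ^ 2 / (2 * mu) + lam * norm g0 ^2 / 2" using h by simp
  also have "\<dots> = norm g0 ^ 2 / (2 * (mu / (lam * mu + 1)))"
    using mu lam by (simp add: field_simps)
  finally show "E x - (INF y. E y) \<le> norm g ^ 2 / (2 * (mu / (lam * mu + 1)))" using gg by simp
qed

lemma part2:
  assumes mu: "mu > 0" and pl: "PL E mu"
  shows "nsPL F (mu / 4)"
  unfolding nsPL_def
proof (rule allI)
  fix x
  show "F x - (INF y. F y) \<le> dist0_sq (subdiff F x) / ereal (2 * (mu / 4))"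
  proof (cases "subdiff F x = {}")
    case True
    then have "dist0_sq (subdiff F x) = \<infinity>" by (simp add: dist0_sq_def)
    then show ?thesis using mu by simp
  next
    case False
    then obtain v0 where "v0 \<in> subdiff F x" by blast
    then have xF: "F x \<noteq> \<infinity>" by (simp add: subdiff_def)
    define c where "c = Fr x - m"
    have cv: "2 * mu * c \<le> norm v ^ 2" if vS: "v \<in> subdiff F x" for v
    proof -
      define y where "y = x + lam *\<^sub>R v"
      have "(1 / lam) *\<^sub>R (y - x) = v" unfolding y_def using lam by simp
      then have vv: "(1 / lam) *\<^sub>R (y - x) \<in> subdiff F x" using vS by simp
      have d: "(E has_derivative (\<lambda>h. v \<bullet> h)) (at y)"
        using E_deriv[OF vv] \<open>(1 / lam) *\<^sub>R (y - x) = v\<close> by simp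
      have "E y - (INF z. E z) \<le> norm v ^ 2 / (2 * mu)" using pl d by (simp add: PL_def)
      moreover have "E y = Fr x + norm (x - y)^2 / (2 * lam)" by (rule E_val[OF vv])
      moreover have "0 \<le> norm (x - y)^2 / (2 * lam)" using lam by simp
      ultimately have "c \<le> norm v ^ 2 / (2 * mu)" using E_inf unfolding c_def by simp
      then have "c * (2 * mu) \<le> norm v ^ 2" using mu by (simp add: pos_le_divide_eq)
      then show ?thesis by (simp add: mult.commute mult.left_commute)
    qed
    have c0: "0 \<le> c" unfolding c_def using Fr_ge[OF xF] by simp
    have idf: "infdist 0 (subdiff F x) = (INF v\<in>subdiff F x. dist 0 v)" unfolding infdist_def using False by simp
    have "sqrt (2 * mu * c) \<le> infdist 0 (subdiff F x)"
      unfolding idf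
    proof (rule cINF_greatest)
      show "subdiff F x \<noteq> {}" using False .
      fix v assume "v \<in> subdiff F x"
      then have "2 * mu * c \<le> norm v ^ 2" by (rule cv)
      then have "sqrt (2 * mu * c) \<le> sqrt (norm v ^ 2)" by (rule real_sqrt_le_mono)
      then show "sqrt (2 * mu * c) \<le> dist 0 v" by simp
    qed
    then have "sqrt (2 * mu * c) ^ 2 \<le> infdist 0 (subdiff F x) ^ 2" by (rule power_mono) (use mu c0 in simp)
    then have "2 * mu * c \<le> infdist 0 (subdiff F x) ^ 2" using mu c0 by simp
    then have "c \<le> infdist 0 (subdiff F x) ^ 2 / (2 * mu)"
      using mu by (simp add: pos_le_divide_eq mult.commute)
    also have "\<dots> \<le> infdist 0 (subdiff F x) ^ 2 / (2 * (mu / 4))"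
      using mu by (intro divide_left_mono) auto
    finally have "c \<le> infdist 0 (subdiff F x) ^ 2 / (2 * (mu / 4))" .
    then show ?thesis using F_eq[OF xF] F_inf False mu by (simp add: dist0_sq_def c_def)
  qed
qed

end


theorem proposition4p1:
  fixes F :: "'a::{real_inner, complete_space} \<Rightarrow> ereal" and lam :: real
  assumes "lam > 0"
    and "convex_fun F" and "proper_fun F" and "lsc_fun F"
    and "\<exists>z. \<forall>x. F z \<le> F x"
  shows "(\<forall>mu>0. nsPL F mu \<longrightarrow> PL (moreau_env F lam) (mu / (lam * mu + 1)))
       \<and> (\<forall>mu>0. PL (moreau_env F lam) mu \<longrightarrow> nsPL F (mu / 4))"
proof -
  obtain z0 where z0: "\<forall>x. F z0 \<le> F x" using assms(5) by blast
  interpret menv F lam z0 using assms(1-4) z0 by unfold_locales auto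
  show ?thesis
  proof (intro conjI allI impI)
    fix mu :: real assume "mu > 0" "nsPL F mu"
    then show "PL (moreau_env F lam) (mu / (lam * mu + 1))" using part1 unfolding E_def by blast
  next
    fix mu :: real assume "mu > 0" "PL (moreau_env F lam) mu"
    then show "nsPL F (mu / 4)" using part2 unfolding E_def by blast
  qed
qed

end
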